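(* Suppose each $\mathcal D_i$ has marginal on $\mathcal X$ equal to $\rho$, each $R_i$ is convex and Fréchet differentiable on $\mathcal H$, and $\ell(h,(x,y))=(h(x)-y)^2$. Let $\theta^*$ be a global minimizer of $L$ and $\omega$ satisfy $\nabla_\omega L(\omega)^\top v\le\epsilon$ for all $v\in\mathcal B=\{\theta\in\mathbb R^d:\|\theta\|_2\le1\}$. Then for all $R>0$, $$L(\omega)-L(\theta^* )\le R\epsilon+2\bar R\cdot\inf_{v\in\mathcal B}\big\|u-(K_\eta\phi)^\top(R\,v)\big\|_\rho,$$ where $\|\cdot\|_\rho$ is the $L_2(\rho)$-norm.
   Context: Let $\mathcal Y\subseteq\mathbb R$, $\rho$ a distribution on $\mathcal X$, $\mathcal D_1,\dots,\mathcal D_n$ distributions on $\mathcal X\times\mathcal Y$, $\phi:\mathcal X\to\mathbb R^d$, $h_\theta=\phi(\cdot)^\top\theta$. $\mathcal H$ is a Hilbert space of functions $\mathcal X\to\mathcal Y$ with inner product $\int fg\,d\rho$ containing all $h_\theta$. $R_i(h)=\mathbb E_{(x,y)\sim\mathcal D_i}[\ell(h,(x,y))]$. Fréchet derivative: bounded linear $A$ with $|R(h+h_1)-R(h)-A(h_1)|/\|h_1\|_{\mathcal H}\to0$; $A=\langle\cdot,a_h\rangle_{\mathcal H}$ and $\delta R/\delta h:=a_h$. For $\eta>0$, $\theta_i=\theta-\eta\nabla_\theta R_i(h_\theta)$ and $L(\theta)=\frac1n\sum_iR_i(h_{\theta_i})$; $\omega_i,\theta^*_i$ are defined from $\omega,\theta^*$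 in the same way. Define $K_\eta=\mathbb E_{x\sim\rho}[I_d-2\eta\phi(x)\phi(x)^\top]$, $u(x')=\Big(\sum_{i}(\delta R_i/\delta h_{\omega_i})(x')(h_{\omega_i}(x')-h_{\theta^*_i}(x'))\Big)/\Big(\sum_i(\delta R_i/\delta h_{\omega_i})(x')\Big)$, and $\bar R=\frac1n\sum_iR_i^{1/2}(h_{\omega_i})=\frac1n\sum_i\{\mathbb E_{(x,y)\sim\mathcal D_i}[(y-h_{\omega_i}(x))^2]\}^{1/2}$. *)

theory Defs
  imports "HOL-Probability.Probability"
begin

definition hth :: "('x \<Rightarrow> real^'d) \<Rightarrow> real^'d \<Rightarrow> 'x \<Rightarrow> real" where
  "hth \<phi> \<theta> = (\<lambda>x. \<phi> x \<bullet> \<theta>)"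

definition risk :: "('x \<times> real) measure \<Rightarrow> ('x \<Rightarrow> real) \<Rightarrow> real" where
  "risk D h = (\<integral>z. (h (fst z) - snd z)^2 \<partial>D)"

definition grad :: "(real^'d \<Rightarrow> real) \<Rightarrow> real^'d \<Rightarrow> real^'d" where
  "grad f \<theta> = (THE g. (f has_derivative (\<lambda>v. g \<bullet> v)) (at \<theta>))"

definition adapt :: "(nat \<Rightarrow> ('x \<times> real) measure) \<Rightarrow> ('x \<Rightarrow> real^'d) \<Rightarrow> real \<Rightarrow> nat \<Rightarrow> real^'d \<Rightarrow> real^'d" where
  "adapt D \<phi> \<eta> i \<theta> = \<theta> - \<eta> *\<^sub>R grad (\<lambda>t. risk (D i) (hth \<phi> t)) \<theta>"

definition Lmeta :: "(nat \<Rightarrow> ('x \<times> real) measure) \<Rightarrow> ('x \<Rightarrow> real^'d) \<Rightarrow> real \<Rightarrow> nat \<Rightarrow> real^'d \<Rightarrow> real" where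
  "Lmeta D \<phi> \<eta> n \<theta> = (1 / real n) * (\<Sum>i<n. risk (D i) (hth \<phi> (adapt D \<phi> \<eta> i \<theta>)))"

definition inner_rho :: "'x measure \<Rightarrow> ('x \<Rightarrow> real) \<Rightarrow> ('x \<Rightarrow> real) \<Rightarrow> real" where
  "inner_rho \<rho> f g = (\<integral>x. f x * g x \<partial>\<rho>)"

definition norm_rho :: "'x measure \<Rightarrow> ('x \<Rightarrow> real) \<Rightarrow> real" where
  "norm_rho \<rho> f = sqrt (\<integral>x. (f x)^2 \<partial>\<rho>)"

definition norm_rho_ext :: "'x measure \<Rightarrow> ('x \<Rightarrow> real) \<Rightarrow> ereal" where
  "norm_rho_ext \<rho> f =
     (if f \<in> borel_measurable \<rho> \<and> integrable \<rho> (\<lambda>x. (f x)^2)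
      then ereal (norm_rho \<rho> f) else \<infinity>)"

definition hilbert_fun_space :: "'x measure \<Rightarrow> ('x \<Rightarrow> real) set \<Rightarrow> bool" where
  "hilbert_fun_space \<rho> H \<longleftrightarrow>
     (\<forall>f\<in>H. f \<in> borel_measurable \<rho> \<and> integrable \<rho> (\<lambda>x. (f x)^2)) \<and>
     (\<lambda>x. 0) \<in> H \<and>
     (\<forall>f\<in>H. \<forall>g\<in>H. (\<lambda>x. f x + g x) \<in> H) \<and>
     (\<forall>c. \<forall>f\<in>H. (\<lambda>x. c * f x) \<in> H) \<and>
     (\<forall>s. (\<forall>k. s k \<in> H) \<longrightarrow>
          (\<forall>e>0. \<exists>N. \<forall>m\<ge>N. \<forall>k\<ge>N. norm_rho \<rho> (\<lambda>x. s m x - s k x) < e) \<longrightarrow>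
          (\<exists>g\<in>H. (\<lambda>k. norm_rho \<rho> (\<lambda>x. s k x - g x)) \<longlonglongrightarrow> 0))"

definition frechet_grad :: "'x measure \<Rightarrow> ('x \<Rightarrow> real) set \<Rightarrow> (('x \<Rightarrow> real) \<Rightarrow> real)
    \<Rightarrow> ('x \<Rightarrow> real) \<Rightarrow> ('x \<Rightarrow> real) \<Rightarrow> bool" where
  "frechet_grad \<rho> H R h a \<longleftrightarrow> a \<in> H \<and>
     (\<forall>e>0. \<exists>\<delta>>0. \<forall>h1\<in>H. 0 < norm_rho \<rho> h1 \<and> norm_rho \<rho> h1 < \<delta> \<longrightarrow>
        \<bar>R (\<lambda>x. h x + h1 x) - R h - inner_rho \<rho> h1 a\<bar> / norm_rho \<rho> h1 < e)"

definition frechet_differentiable_on :: "'x measure \<Rightarrow> ('x \<Rightarrow> real) set \<Rightarrow> (('x \<Rightarrow> real) \<Rightarrow> real) \<Rightarrow> bool" where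
  "frechet_differentiable_on \<rho> H R \<longleftrightarrow> (\<forall>h\<in>H. \<exists>a. frechet_grad \<rho> H R h a)"

definition convex_on_H :: "('x \<Rightarrow> real) set \<Rightarrow> (('x \<Rightarrow> real) \<Rightarrow> real) \<Rightarrow> bool" where
  "convex_on_H H R \<longleftrightarrow> (\<forall>f\<in>H. \<forall>g\<in>H. \<forall>t::real. 0 \<le> t \<and> t \<le> 1 \<longrightarrow>
      R (\<lambda>x. t * f x + (1 - t) * g x) \<le> t * R f + (1 - t) * R g)"

definition Keta :: "'x measure \<Rightarrow> ('x \<Rightarrow> real^'d) \<Rightarrow> real \<Rightarrow> real^'d^'d" where
  "Keta \<rho> \<phi> \<eta> = (\<integral>x. (mat 1 - (2 * \<eta>) *\<^sub>R (\<chi> i j. \<phi> x $ i * \<phi> x $ j)) \<partial>\<rho>)"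

end

theory Submission
  imports Defs
begin


definition L2 :: "'a measure \<Rightarrow> ('a \<Rightarrow> real) \<Rightarrow> bool" where
  "L2 M f \<longleftrightarrow> f \<in> borel_measurable M \<and> integrable M (\<lambda>x. (f x)^2)"

lemma L2_mult_int:
  assumes "L2 M f" "L2 M g" shows "integrable M (\<lambda>x. f x * g x)"
proof (rule Bochner_Integration.integrable_bound[where f="\<lambda>x. (f x)^2 + (g x)^2"])
  show "integrable M (\<lambda>x. (f x)^2 + (g x)^2)" using assms by (auto simp: L2_def)
  show "(\<lambda>x. f x * g x) \<in> borel_measurable M" using assms by (auto simp: L2_def)
  show "AE x in M. norm (f x * g x) \<le> norm ((f x)^2 + (g x)^2)"
  proof (rule AE_I2)
    fix x
    have "0 \<le> (\<bar>f x\<bar> - \<bar>g x\<bar>)^2" by simp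
    then have "2 * (\<bar>f x\<bar> * \<bar>g x\<bar>) \<le> (f x)^2 + (g x)^2" by (simp add: power2_diff)
    moreover have "0 \<le> \<bar>f x\<bar> * \<bar>g x\<bar>" by simp
    ultimately have "\<bar>f x\<bar> * \<bar>g x\<bar> \<le> (f x)^2 + (g x)^2" by linarith
    then show "norm (f x * g x) \<le> norm ((f x)^2 + (g x)^2)"
      by (simp add: abs_mult)
  qed
qed

lemma L2_add: assumes "L2 M f" "L2 M g" shows "L2 M (\<lambda>x. f x + g x)"
proof -
  have "integrable M (\<lambda>x. (f x)^2 + 2 * (f x * g x) + (g x)^2)"
    using assms L2_mult_int[OF assms] by (auto simp: L2_def)
  moreover have "(\<lambda>x. (f x + g x)^2) = (\<lambda>x. (f x)^2 + 2 * (f x * g x) + (g x)^2)"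
    by (auto simp: power2_sum)
  moreover have "(\<lambda>x. f x + g x) \<in> borel_measurable M" using assms by (auto simp: L2_def)
  ultimately show ?thesis by (simp add: L2_def)
qed

lemma L2_scale: assumes "L2 M f" shows "L2 M (\<lambda>x. c * f x)"
  using assms by (auto simp: L2_def power_mult_distrib)

lemma L2_minus: assumes "L2 M f" "L2 M g" shows "L2 M (\<lambda>x. f x - g x)"
  using L2_add[OF assms(1) L2_scale[OF assms(2), of "-1"]] by simp

lemma L2_sum: assumes "\<And>i. i \<in> I \<Longrightarrow> L2 M (f i)" shows "L2 M (\<lambda>x. \<Sum>i\<in>I. f i x)"
  using assms
proof (induction I rule: infinite_finite_induct)
  case (infinite A) then show ?case by (simp add: L2_def)
next
  case empty then show ?case by (simp add: L2_def)
next
  case (insert x F) then show ?case by (simp add: L2_add)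
qed

lemma L2_CS:
  assumes f: "L2 M f" and g: "L2 M g"
  shows "\<bar>\<integral>x. f x * g x \<partial>M\<bar> \<le> sqrt (\<integral>x. (f x)^2 \<partial>M) * sqrt (\<integral>x. (g x)^2 \<partial>M)"
proof -
  define A where "A = (\<integral>x. (f x)^2 \<partial>M)"
  define B where "B = (\<integral>x. (g x)^2 \<partial>M)"
  define C where "C = (\<integral>x. f x * g x \<partial>M)"
  have fg: "integrable M (\<lambda>x. f x * g x)" by (rule L2_mult_int[OF f g])
  have quad: "0 \<le> A - 2 * t * C + t^2 * B" for t
  proof -
    have "0 \<le> (\<integral>x. (f x - t * g x)^2 \<partial>M)" by simp
    also have "(\<integral>x. (f x - t * g x)^2 \<partial>M) = (\<integral>x. (f x)^2 - 2 * t * (f x * g x) + t^2 * (g x)^2 \<partial>M)"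
      by (rule Bochner_Integration.integral_cong) (auto simp: power2_eq_square algebra_simps)
    also have "\<dots> = A - 2 * t * C + t^2 * B"
      using f g fg by (simp add: L2_def A_def B_def C_def)
    finally show ?thesis .
  qed
  have A0: "0 \<le> A" unfolding A_def by simp
  have B0: "0 \<le> B" unfolding B_def by simp
  have "C^2 \<le> A * B"
  proof (cases "B = 0")
    case True
    have "C = 0"
    proof (rule ccontr)
      assume "C \<noteq> 0"
      have "0 \<le> A - 2 * ((A + 1) / (2 * C)) * C" using quad[of "(A + 1) / (2 * C)"] True by simp
      then show False using \<open>C \<noteq> 0\<close> by (simp add: field_simps)
    qed
    then show ?thesis using A0 B0 by simp
  next
    case False
    then have Bp: "B > 0" using B0 by simp
    have "0 \<le> A - 2 * (C / B) * C + (C / B)^2 * B" by (rule quad)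
    also have "\<dots> = (A * B - C^2) / B" using Bp by (simp add: field_simps power2_eq_square)
    finally show ?thesis using Bp by (simp add: divide_nonneg_pos zero_le_divide_iff)
  qed
  then have "sqrt (C^2) \<le> sqrt (A * B)" by (rule real_sqrt_le_mono)
  then show ?thesis by (simp add: A_def B_def C_def real_sqrt_mult)
qed
lemma L2_sq_add: assumes "L2 M f" "L2 M g"
  shows "(\<integral>x. (f x + g x)^2 \<partial>M) = (\<integral>x. (f x)^2 \<partial>M) + 2 * (\<integral>x. f x * g x \<partial>M) + (\<integral>x. (g x)^2 \<partial>M)"
proof -
  have "(\<integral>x. (f x + g x)^2 \<partial>M) = (\<integral>x. (f x)^2 + 2 * (f x * g x) + (g x)^2 \<partial>M)"
    by (rule Bochner_Integration.integral_cong) (auto simp: power2_sum)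
  also have "\<dots> = (\<integral>x. (f x)^2 \<partial>M) + 2 * (\<integral>x. f x * g x \<partial>M) + (\<integral>x. (g x)^2 \<partial>M)"
    using assms L2_mult_int[OF assms] by (simp add: L2_def)
  finally show ?thesis .
qed

lemma quad_deriv:
  fixes f :: "real^'d \<Rightarrow> real"
  assumes eq: "\<And>s. f (t + s) = f t + g \<bullet> s + Q s" and bd: "\<And>s. 0 \<le> Q s \<and> Q s \<le> C * (norm s)^2"
  shows "(f has_derivative (\<lambda>s. g \<bullet> s)) (at t)"
  unfolding has_derivative_at_alt
proof (intro conjI allI impI)
  show "bounded_linear ((\<bullet>) g)" by (rule bounded_linear_inner_right)
  fix e :: real assume e: "e > 0"
  define d where "d = e / (\<bar>C\<bar> + 1)"
  have d: "d > 0" using e by (simp add: d_def)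
  show "\<exists>d>0. \<forall>y. norm (y - t) < d \<longrightarrow> norm (f y - f t - g \<bullet> (y - t)) \<le> e * norm (y - t)"
  proof (intro exI[of _ d] conjI allI impI d)
    fix y assume y: "norm (y - t) < d"
    have "f y = f t + g \<bullet> (y - t) + Q (y - t)" using eq[of "y - t"] by simp
    then have "norm (f y - f t - g \<bullet> (y - t)) = Q (y - t)" using bd[of "y - t"] by simp
    also have "\<dots> \<le> C * (norm (y - t))^2" using bd by blast
    also have "\<dots> \<le> (\<bar>C\<bar> + 1) * norm (y - t) * norm (y - t)"
    proof -
      have "C * (norm (y - t) * norm (y - t)) \<le> (\<bar>C\<bar> + 1) * (norm (y - t) * norm (y - t))"
        by (rule mult_right_mono) auto
      then show ?thesis by (simp add: power2_eq_square mult.assoc)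
    qed
    also have "\<dots> \<le> (\<bar>C\<bar> + 1) * d * norm (y - t)"
      using y by (intro mult_right_mono mult_left_mono) auto
    also have "\<dots> = e * norm (y - t)" by (simp add: d_def)
    finally show "norm (f y - f t - g \<bullet> (y - t)) \<le> e * norm (y - t)" .
  qed
qed

lemma grad_unique:
  fixes f :: "real^'d \<Rightarrow> real"
  assumes "(f has_derivative (\<lambda>v. g \<bullet> v)) (at x)"
  shows "grad f x = g"
  unfolding grad_def
proof (rule the_equality)
  show "(f has_derivative (\<lambda>v. g \<bullet> v)) (at x)" by (rule assms)
  fix g' assume "(f has_derivative (\<lambda>v. g' \<bullet> v)) (at x)"
  then have "(\<lambda>v. g' \<bullet> v) = (\<lambda>v. g \<bullet> v)" using assms has_derivative_unique by blast
  then have "g' \<bullet> (g' - g) = g \<bullet> (g' - g)" by metis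
  then have "(g' - g) \<bullet> (g' - g) = 0" by (simp add: inner_diff_left)
  then show "g' = g" by simp
qed

locale setting =
  fixes \<rho> :: "'x measure" and D :: "nat \<Rightarrow> ('x \<times> real) measure" and n :: nat
    and \<phi> :: "'x \<Rightarrow> real^'d" and H :: "('x \<Rightarrow> real) set"
  assumes rho_prob: "prob_space \<rho>"
    and D_prob: "\<And>i. i < n \<Longrightarrow> prob_space (D i)"
    and D_sets: "\<And>i. i < n \<Longrightarrow> sets (D i) = sets (\<rho> \<Otimes>\<^sub>M borel)"
    and D_marg: "\<And>i. i < n \<Longrightarrow> distr (D i) \<rho> fst = \<rho>"
    and y_L2: "\<And>i. i < n \<Longrightarrow> integrable (D i) (\<lambda>z. (snd z)^2)"
    and H: "hilbert_fun_space \<rho> H"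
    and H_lin: "\<And>\<theta>. hth \<phi> \<theta> \<in> H"
begin

lemma H_L2: "f \<in> H \<Longrightarrow> L2 \<rho> f"
  using H[unfolded hilbert_fun_space_def, THEN conjunct1] unfolding L2_def by blast

lemma H_scale: "f \<in> H \<Longrightarrow> (\<lambda>x. c * f x) \<in> H"
  using H[unfolded hilbert_fun_space_def, THEN conjunct2, THEN conjunct2, THEN conjunct2, THEN conjunct1] by blast

lemma hth_L2: "L2 \<rho> (hth \<phi> t)"
  using H_L2 H_lin by blast

lemma phi_L2: "L2 \<rho> (\<lambda>x. \<phi> x $ j)"
proof -
  have "hth \<phi> (axis j 1) = (\<lambda>x. \<phi> x $ j)" by (simp add: hth_def inner_axis)
  then show ?thesis using hth_L2[of "axis j 1"] by simp
qed

lemma fst_meas: "i < n \<Longrightarrow> fst \<in> measurable (D i) \<rho>"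
  using measurable_cong_sets[OF D_sets refl, of i \<rho>] measurable_fst by blast

lemma snd_meas: "i < n \<Longrightarrow> snd \<in> borel_measurable (D i)"
  using measurable_cong_sets[OF D_sets refl, of i borel] measurable_snd by blast

lemma snd_L2: "i < n \<Longrightarrow> L2 (D i) snd"
  using snd_meas y_L2 by (simp add: L2_def)

lemma comp_meas: "i < n \<Longrightarrow> f \<in> borel_measurable \<rho> \<Longrightarrow> (\<lambda>z. f (fst z)) \<in> borel_measurable (D i)"
  using fst_meas measurable_compose by blast

lemma comp_integrable:
  assumes i: "i < n" and f: "(f::'x\<Rightarrow>real) \<in> borel_measurable \<rho>" and fi: "integrable \<rho> f"
  shows "integrable (D i) (\<lambda>z. f (fst z))"
proof -
  have "integrable (distr (D i) \<rho> fst) f \<longleftrightarrow> integrable (D i) (\<lambda>z. f (fst z))"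
    by (rule integrable_distr_eq[OF fst_meas[OF i] f])
  then show ?thesis using D_marg[OF i] fi by simp
qed

lemma comp_integral:
  assumes i: "i < n" and f: "(f::'x\<Rightarrow>real) \<in> borel_measurable \<rho>"
  shows "(\<integral>z. f (fst z) \<partial>D i) = (\<integral>x. f x \<partial>\<rho>)"
proof -
  have "integral\<^sup>L (distr (D i) \<rho> fst) f = (\<integral>z. f (fst z) \<partial>D i)"
    by (rule integral_distr[OF fst_meas[OF i] f])
  then show ?thesis using D_marg[OF i] by simp
qed

lemma comp_L2: "i < n \<Longrightarrow> L2 \<rho> f \<Longrightarrow> L2 (D i) (\<lambda>z. f (fst z))"
  unfolding L2_def using comp_meas comp_integrable[of i "\<lambda>x. (f x)^2"] by auto

lemma comp_L2_int: "i < n \<Longrightarrow> L2 \<rho> f \<Longrightarrow> (\<integral>z. (f (fst z))^2 \<partial>D i) = (\<integral>x. (f x)^2 \<partial>\<rho>)"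
  using comp_integral[of i "\<lambda>x. (f x)^2"] by (auto simp: L2_def)

definition e :: "nat \<Rightarrow> real^'d \<Rightarrow> 'x \<times> real \<Rightarrow> real" where
  "e i t z = hth \<phi> t (fst z) - snd z"

definition G :: "nat \<Rightarrow> real^'d \<Rightarrow> real^'d" where
  "G i t = (\<chi> j. 2 * (\<integral>z. e i t z * \<phi> (fst z) $ j \<partial>D i))"

lemma e_L2: "i < n \<Longrightarrow> L2 (D i) (e i t)"
  unfolding e_def[abs_def] by (rule L2_minus[OF comp_L2[OF _ hth_L2] snd_L2])

lemma risk_e: "risk (D i) (hth \<phi> t) = (\<integral>z. (e i t z)^2 \<partial>D i)"
  by (simp add: risk_def e_def)

lemma G_lin: assumes i: "i < n" shows "2 * (\<integral>z. e i t z * (\<phi> (fst z) \<bullet> s) \<partial>D i) = G i t \<bullet> s"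
proof -
  have int: "integrable (D i) (\<lambda>z. e i t z * \<phi> (fst z) $ j)" for j
    by (rule L2_mult_int[OF e_L2[OF i] comp_L2[OF i phi_L2]])
  have "(\<integral>z. e i t z * (\<phi> (fst z) \<bullet> s) \<partial>D i) = (\<integral>z. (\<Sum>j\<in>UNIV. s $ j * (e i t z * \<phi> (fst z) $ j)) \<partial>D i)"
    by (rule Bochner_Integration.integral_cong) (auto simp: inner_vec_def sum_distrib_left ac_simps)
  also have "\<dots> = (\<Sum>j\<in>UNIV. s $ j * (\<integral>z. e i t z * \<phi> (fst z) $ j \<partial>D i))"
    using int by (simp add: integral_sum)
  finally show ?thesis by (simp add: G_def inner_vec_def sum_distrib_left ac_simps)
qed

lemma norm_sq_sum: "(norm (v::real^'d))^2 = (\<Sum>j\<in>UNIV. (v $ j)^2)"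
  by (simp add: norm_vec_def L2_set_def sum_nonneg)

definition C0 :: real where "C0 = (\<integral>x. (norm (\<phi> x))^2 \<partial>\<rho>)"

lemma rem_bound: "0 \<le> (\<integral>x. (\<phi> x \<bullet> s)^2 \<partial>\<rho>) \<and> (\<integral>x. (\<phi> x \<bullet> s)^2 \<partial>\<rho>) \<le> C0 * (norm s)^2"
proof
  show "0 \<le> (\<integral>x. (\<phi> x \<bullet> s)^2 \<partial>\<rho>)" by simp
  have i1: "integrable \<rho> (\<lambda>x. (\<phi> x \<bullet> s)^2)" using hth_L2[of s] by (simp add: L2_def hth_def)
  have i2: "integrable \<rho> (\<lambda>x. (norm (\<phi> x))^2)"
    using phi_L2 by (simp add: norm_sq_sum L2_def)
  have "(\<integral>x. (\<phi> x \<bullet> s)^2 \<partial>\<rho>) \<le> (\<integral>x. (norm (\<phi> x))^2 * (norm s)^2 \<partial>\<rho>)"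
  proof (rule integral_mono[OF i1])
    show "integrable \<rho> (\<lambda>x. (norm (\<phi> x))^2 * (norm s)^2)" using i2 by simp
    fix x
    have "\<bar>\<phi> x \<bullet> s\<bar> \<le> norm (\<phi> x) * norm s" by (rule Cauchy_Schwarz_ineq2)
    then have "\<bar>\<phi> x \<bullet> s\<bar>^2 \<le> (norm (\<phi> x) * norm s)^2" by (rule power_mono) simp
    then show "(\<phi> x \<bullet> s)^2 \<le> (norm (\<phi> x))^2 * (norm s)^2" by (simp add: power_mult_distrib)
  qed
  then show "(\<integral>x. (\<phi> x \<bullet> s)^2 \<partial>\<rho>) \<le> C0 * (norm s)^2" by (simp add: C0_def)
qed

lemma F_expand: assumes i: "i < n"
  shows "risk (D i) (hth \<phi> (t + s)) = risk (D i) (hth \<phi> t) + G i t \<bullet> s + (\<integral>x. (\<phi> x \<bullet> s)^2 \<partial>\<rho>)"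
proof -
  have ee: "e i (t + s) z = e i t z + hth \<phi> s (fst z)" for z
    by (simp add: e_def hth_def inner_add_right)
  have "risk (D i) (hth \<phi> (t + s)) = (\<integral>z. (e i t z + hth \<phi> s (fst z))^2 \<partial>D i)"
    by (simp add: risk_e ee)
  also have "\<dots> = risk (D i) (hth \<phi> t) + 2 * (\<integral>z. e i t z * hth \<phi> s (fst z) \<partial>D i) + (\<integral>z. (hth \<phi> s (fst z))^2 \<partial>D i)"
    by (simp add: L2_sq_add[OF e_L2[OF i] comp_L2[OF i hth_L2]] risk_e)
  also have "2 * (\<integral>z. e i t z * hth \<phi> s (fst z) \<partial>D i) = G i t \<bullet> s"
    using G_lin[OF i] by (simp add: hth_def)
  also have "(\<integral>z. (hth \<phi> s (fst z))^2 \<partial>D i) = (\<integral>x. (\<phi> x \<bullet> s)^2 \<partial>\<rho>)"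
    using comp_L2_int[OF i hth_L2] by (simp add: hth_def)
  finally show ?thesis .
qed

lemma F_deriv: "i < n \<Longrightarrow> ((\<lambda>t. risk (D i) (hth \<phi> t)) has_derivative (\<lambda>s. G i t \<bullet> s)) (at t)"
  by (rule quad_deriv[OF F_expand rem_bound])

lemma grad_F: "i < n \<Longrightarrow> grad (\<lambda>t. risk (D i) (hth \<phi> t)) t = G i t"
  by (rule grad_unique[OF F_deriv])

end


context setting
begin

definition M :: "real^'d^'d" where "M = (\<chi> j k. \<integral>x. \<phi> x $ j * \<phi> x $ k \<partial>\<rho>)"
definition b :: "nat \<Rightarrow> real^'d" where "b i = (\<chi> j. \<integral>z. snd z * \<phi> (fst z) $ j \<partial>D i)"

lemma G_affine: assumes i: "i < n" shows "G i t = 2 *\<^sub>R (M *v t) - 2 *\<^sub>R b i"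
proof -
  have "(\<integral>z. e i t z * \<phi> (fst z) $ j \<partial>D i) = (M *v t) $ j - b i $ j" for j
  proof -
    have i1: "integrable (D i) (\<lambda>z. hth \<phi> t (fst z) * \<phi> (fst z) $ j)"
      by (rule L2_mult_int[OF comp_L2[OF i hth_L2] comp_L2[OF i phi_L2]])
    have i2: "integrable (D i) (\<lambda>z. snd z * \<phi> (fst z) $ j)"
      by (rule L2_mult_int[OF snd_L2[OF i] comp_L2[OF i phi_L2]])
    have "(\<integral>z. e i t z * \<phi> (fst z) $ j \<partial>D i)
        = (\<integral>z. hth \<phi> t (fst z) * \<phi> (fst z) $ j - snd z * \<phi> (fst z) $ j \<partial>D i)"
      by (rule Bochner_Integration.integral_cong) (auto simp: e_def algebra_simps)
    also have "\<dots> = (\<integral>z. hth \<phi> t (fst z) * \<phi> (fst z) $ j \<partial>D i) - b i $ j"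
      using i1 i2 by (simp add: b_def)
    also have "(\<integral>z. hth \<phi> t (fst z) * \<phi> (fst z) $ j \<partial>D i) = (\<integral>x. hth \<phi> t x * \<phi> x $ j \<partial>\<rho>)"
      by (rule comp_integral[OF i]) (use hth_L2 phi_L2 in \<open>auto simp: L2_def intro!: borel_measurable_times\<close>)
    also have "\<dots> = (\<integral>x. (\<Sum>k\<in>UNIV. t $ k * (\<phi> x $ j * \<phi> x $ k)) \<partial>\<rho>)"
      by (rule Bochner_Integration.integral_cong) (auto simp: hth_def inner_vec_def sum_distrib_left sum_distrib_right ac_simps)
    also have "\<dots> = (\<Sum>k\<in>UNIV. t $ k * (\<integral>x. \<phi> x $ j * \<phi> x $ k \<partial>\<rho>))"
      using L2_mult_int[OF phi_L2 phi_L2] by (simp add: integral_sum)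
    also have "\<dots> = (M *v t) $ j"
      by (simp add: M_def matrix_vector_mult_def ac_simps)
    finally show ?thesis .
  qed
  then show ?thesis unfolding G_def vec_eq_iff by (simp only: vec_lambda_beta vector_minus_component vector_scaleR_component real_scaleR_def right_diff_distrib) simp
qed

lemma M_sym: "transpose M = M"
  by (simp add: M_def transpose_def vec_eq_iff mult.commute)

lemma sum_if_const: "(\<Sum>x\<in>S. if P then g x else 0) = (if P then sum g S else (0::real))"
  by auto
lemma mat_decomp: "(\<chi> a c. f a c) = (\<Sum>j\<in>UNIV. \<Sum>k\<in>UNIV. (f j k :: real) *\<^sub>R axis j (axis k 1))"
proof -
  have ax: "axis j (axis k (1::real)) $ a $ c = (if j = a then (if k = c then 1 else 0) else 0)" for j k a c
    by (simp add: axis_def)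
  show ?thesis by (simp add: vec_eq_iff ax if_distrib[of "\<lambda>x. f _ _ * x"] sum_if_const cong: if_cong)
qed

lemma Keta_eq: "Keta \<rho> \<phi> \<eta> = mat 1 - (2 * \<eta>) *\<^sub>R M"
proof -
  define P where "P x = (\<chi> a c. \<phi> x $ a * \<phi> x $ c)" for x
  have Pd: "P = (\<lambda>x. \<Sum>j\<in>UNIV. \<Sum>k\<in>UNIV. (\<phi> x $ j * \<phi> x $ k) *\<^sub>R axis j (axis k 1))"
    unfolding P_def by (rule ext, rule mat_decomp)
  have ints: "integrable \<rho> (\<lambda>x. \<phi> x $ j * \<phi> x $ k)" for j k
    by (rule L2_mult_int[OF phi_L2 phi_L2])
  have iP: "integrable \<rho> P" unfolding Pd using ints by auto
  have IP: "integral\<^sup>L \<rho> P = M"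
    unfolding Pd M_def mat_decomp[of "\<lambda>j k. \<integral>x. \<phi> x $ j * \<phi> x $ k \<partial>\<rho>"]
    using ints by (simp add: integral_sum)
  have "Keta \<rho> \<phi> \<eta> = (\<integral>x. mat 1 - (2 * \<eta>) *\<^sub>R P x \<partial>\<rho>)"
    by (simp add: Keta_def P_def)
  also have "\<dots> = (\<integral>x. mat 1 \<partial>\<rho>) - (\<integral>x. (2 * \<eta>) *\<^sub>R P x \<partial>\<rho>)"
    by (rule Bochner_Integration.integral_diff) (use iP rho_prob prob_space.finite_measure finite_measure.integrable_const in auto)
  also have "\<dots> = mat 1 - (2 * \<eta>) *\<^sub>R M"
    using IP rho_prob by (simp add: prob_space.prob_space)
  finally show ?thesis .
qed

definition K :: "real \<Rightarrow> real^'d^'d" where "K \<eta> = mat 1 - (2 * \<eta>) *\<^sub>R M"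

lemma K_sym: "transpose (K \<eta>) = K \<eta>"
  using M_sym by (simp add: K_def transpose_def vec_eq_iff mat_def M_def mult.commute)

lemma adapt_eq: "i < n \<Longrightarrow> adapt D \<phi> \<eta> i t = K \<eta> *v t + (2 * \<eta>) *\<^sub>R b i"
  by (simp add: adapt_def grad_F G_affine K_def algebra_simps scaleR_matrix_vector_assoc)

lemma adapt_deriv: "i < n \<Longrightarrow> ((\<lambda>t. adapt D \<phi> \<eta> i t) has_derivative (\<lambda>v. K \<eta> *v v)) (at t)"
proof -
  assume i: "i < n"
  have "(\<lambda>t. adapt D \<phi> \<eta> i t) = (\<lambda>t. K \<eta> *v t + (2 * \<eta>) *\<^sub>R b i)"
    using adapt_eq[OF i] by (rule ext)
  moreover have "((\<lambda>t. K \<eta> *v t + (2 * \<eta>) *\<^sub>R b i) has_derivative (\<lambda>v. K \<eta> *v v)) (at t)"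
    by (rule has_derivative_add_const, rule bounded_linear_imp_has_derivative) simp
  ultimately show ?thesis by simp
qed

lemma L_deriv: "(Lmeta D \<phi> \<eta> n has_derivative
    (\<lambda>v. (1 / real n) * (\<Sum>i<n. G i (adapt D \<phi> \<eta> i t) \<bullet> (K \<eta> *v v)))) (at t)"
proof -
  have "((\<lambda>t. risk (D i) (hth \<phi> (adapt D \<phi> \<eta> i t))) has_derivative
        (\<lambda>v. G i (adapt D \<phi> \<eta> i t) \<bullet> (K \<eta> *v v))) (at t)" if i: "i \<in> {..<n}" for i
  proof -
    have i': "i < n" using i by simp
    show ?thesis using has_derivative_compose[OF adapt_deriv[OF i'] F_deriv[OF i']] .
  qed
  then have "((\<lambda>t. \<Sum>i<n. risk (D i) (hth \<phi> (adapt D \<phi> \<eta> i t))) has_derivative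
        (\<lambda>v. \<Sum>i<n. G i (adapt D \<phi> \<eta> i t) \<bullet> (K \<eta> *v v))) (at t)"
    by (rule has_derivative_sum)
  then have "((\<lambda>t. (1 / real n) * (\<Sum>i<n. risk (D i) (hth \<phi> (adapt D \<phi> \<eta> i t)))) has_derivative
        (\<lambda>v. (1 / real n) * (\<Sum>i<n. G i (adapt D \<phi> \<eta> i t) \<bullet> (K \<eta> *v v)))) (at t)"
    by (rule has_derivative_mult_right)
  then show ?thesis by (simp add: Lmeta_def[abs_def])
qed

lemma grad_L_inner:
  "grad (Lmeta D \<phi> \<eta> n) t \<bullet> p = (1 / real n) * (\<Sum>i<n. G i (adapt D \<phi> \<eta> i t) \<bullet> (K \<eta> *v p))"
proof -
  define g where "g = (1 / real n) *\<^sub>R (\<Sum>i<n. G i (adapt D \<phi> \<eta> i t) v* K \<eta>)"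
  have eq: "g \<bullet> v = (1 / real n) * (\<Sum>i<n. G i (adapt D \<phi> \<eta> i t) \<bullet> (K \<eta> *v v))" for v
    by (simp add: g_def inner_sum_left dot_lmul_matrix)
  have "(Lmeta D \<phi> \<eta> n has_derivative (\<lambda>v. g \<bullet> v)) (at t)"
    using L_deriv by (simp only: eq)
  then have "grad (Lmeta D \<phi> \<eta> n) t = g" by (rule grad_unique)
  then show ?thesis using eq by simp
qed

lemma frechet_rep:
  assumes i: "i < n" and fg: "frechet_grad \<rho> H (risk (D i)) (hth \<phi> t) a" and g: "g \<in> H"
  shows "inner_rho \<rho> g a = 2 * (\<integral>z. e i t z * g (fst z) \<partial>D i)"
proof -
  define N2 where "N2 = (\<integral>x. (g x)^2 \<partial>\<rho>)"
  define B where "B = (\<integral>z. e i t z * g (fst z) \<partial>D i)"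
  define A where "A = inner_rho \<rho> g a"
  have aH: "a \<in> H" using fg by (simp add: frechet_grad_def)
  have gL: "L2 \<rho> g" by (rule H_L2[OF g])
  have aL: "L2 \<rho> a" by (rule H_L2[OF aH])
  have gD: "L2 (D i) (\<lambda>z. g (fst z))" by (rule comp_L2[OF i gL])
  have N2_0: "N2 \<ge> 0" unfolding N2_def by simp
  have gD2: "(\<integral>z. (g (fst z))^2 \<partial>D i) = N2" unfolding N2_def by (rule comp_L2_int[OF i gL])
  have expand: "risk (D i) (\<lambda>x. hth \<phi> t x + s * g x) = risk (D i) (hth \<phi> t) + 2 * s * B + s^2 * N2" for s
  proof -
    have sL: "L2 (D i) (\<lambda>z. s * g (fst z))" by (rule L2_scale[OF gD])
    have "risk (D i) (\<lambda>x. hth \<phi> t x + s * g x) = (\<integral>z. (e i t z + s * g (fst z))^2 \<partial>D i)"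
      by (simp add: risk_def e_def algebra_simps)
    also have "\<dots> = risk (D i) (hth \<phi> t) + 2 * (\<integral>z. e i t z * (s * g (fst z)) \<partial>D i) + (\<integral>z. (s * g (fst z))^2 \<partial>D i)"
      by (simp add: L2_sq_add[OF e_L2[OF i] sL] risk_e)
    also have "(\<integral>z. e i t z * (s * g (fst z)) \<partial>D i) = s * B"
      unfolding B_def by (simp add: mult.left_commute)
    also have "(\<integral>z. (s * g (fst z))^2 \<partial>D i) = s^2 * N2"
      using gD2 by (simp add: power_mult_distrib)
    finally show ?thesis by simp
  qed
  have nrm: "norm_rho \<rho> (\<lambda>x. s * g x) = \<bar>s\<bar> * sqrt N2" for s
    by (simp add: norm_rho_def N2_def power_mult_distrib real_sqrt_mult)
  have inr: "inner_rho \<rho> (\<lambda>x. s * g x) a = s * A" for s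
    by (simp add: inner_rho_def A_def mult.assoc)
  show ?thesis
  proof (cases "N2 = 0")
    case True
    have "\<bar>A\<bar> \<le> sqrt N2 * sqrt (\<integral>x. (a x)^2 \<partial>\<rho>)"
      unfolding A_def inner_rho_def N2_def by (rule L2_CS[OF gL aL])
    then have A0: "A = 0" using True by simp
    have "\<bar>B\<bar> \<le> sqrt (\<integral>z. (e i t z)^2 \<partial>D i) * sqrt (\<integral>z. (g (fst z))^2 \<partial>D i)"
      unfolding B_def by (rule L2_CS[OF e_L2[OF i] gD])
    then have B0: "B = 0" using True gD2 by simp
    show ?thesis using A0 B0 by (simp add: A_def B_def)
  next
    case False
    then have Np: "N2 > 0" using N2_0 by simp
    define q where "q = sqrt N2"
    have qp: "q > 0" using Np by (simp add: q_def)
    show ?thesis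
    proof (rule ccontr)
      assume "inner_rho \<rho> g a \<noteq> 2 * (\<integral>z. e i t z * g (fst z) \<partial>D i)"
      then have dne: "2 * B - A \<noteq> 0" by (simp add: A_def B_def)
      define dd where "dd = \<bar>2 * B - A\<bar>"
      have ddp: "dd > 0" using dne by (simp add: dd_def)
      define ep where "ep = dd / (2 * q)"
      have ep: "ep > 0" using ddp qp by (simp add: ep_def)
      obtain \<delta> where dp: "\<delta> > 0" and H1: "\<And>h1. h1 \<in> H \<Longrightarrow> 0 < norm_rho \<rho> h1 \<Longrightarrow> norm_rho \<rho> h1 < \<delta> \<Longrightarrow>
          \<bar>risk (D i) (\<lambda>x. hth \<phi> t x + h1 x) - risk (D i) (hth \<phi> t) - inner_rho \<rho> h1 a\<bar> / norm_rho \<rho> h1 < ep"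
        using fg ep unfolding frechet_grad_def by meson
      define s where "s = min (\<delta> / (2 * q)) (dd / (4 * N2))"
      have sp: "s > 0" using dp qp ddp Np by (simp add: s_def)
      have s1: "s * q < \<delta>"
      proof -
        have "s \<le> \<delta> / (2 * q)" by (simp add: s_def)
        then have "s * q \<le> \<delta> / (2 * q) * q" by (rule mult_right_mono) (use qp in simp)
        also have "\<dots> = \<delta> / 2" using qp by simp
        finally show ?thesis using dp by simp
      qed
      have s2: "s * N2 \<le> dd / 4"
      proof -
        have "s \<le> dd / (4 * N2)" by (simp add: s_def)
        then have "s * N2 \<le> dd / (4 * N2) * N2" by (rule mult_right_mono) (use Np in simp)
        also have "\<dots> = dd / 4" using Np by simp
        finally show ?thesis .
      qed
      have nr: "norm_rho \<rho> (\<lambda>x. s * g x) = s * q" using nrm[of s] sp by (simp add: q_def)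
      have "\<bar>risk (D i) (\<lambda>x. hth \<phi> t x + s * g x) - risk (D i) (hth \<phi> t) - inner_rho \<rho> (\<lambda>x. s * g x) a\<bar> / norm_rho \<rho> (\<lambda>x. s * g x) < ep"
      proof -
        have hs: "(\<lambda>x. s * g x) \<in> H" by (rule H_scale[OF g])
        show ?thesis using H1[OF hs] nr sp qp s1 by simp
      qed
      then have "\<bar>2 * s * B + s^2 * N2 - s * A\<bar> / (s * q) < ep"
        by (simp add: expand inr nr)
      then have lt: "\<bar>2 * s * B + s^2 * N2 - s * A\<bar> < ep * (s * q)"
        using sp qp by (simp add: divide_less_eq)
      have "ep * (s * q) = s * (dd / 2)" using qp by (simp add: ep_def)
      moreover have "\<bar>2 * s * B + s^2 * N2 - s * A\<bar> = s * \<bar>(2 * B - A) + s * N2\<bar>"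
      proof -
        have "2 * s * B + s^2 * N2 - s * A = s * ((2 * B - A) + s * N2)"
          by (simp add: power2_eq_square algebra_simps)
        then show ?thesis using sp by (simp add: abs_mult)
      qed
      moreover have "\<bar>(2 * B - A) + s * N2\<bar> \<ge> dd - dd / 4"
      proof -
        have sn: "0 \<le> s * N2" using sp Np by simp
        show ?thesis using s2 sn unfolding dd_def by (auto simp: abs_if)
      qed
      ultimately have "s * (dd - dd / 4) < s * (dd / 2)"
        using lt sp by (smt (verit) mult_left_mono)
      then show False using sp ddp by simp
    qed
  qed
qed

lemma a_norm:
  assumes i: "i < n" and fg: "frechet_grad \<rho> H (risk (D i)) (hth \<phi> t) a"
  shows "sqrt (\<integral>x. (a x)^2 \<partial>\<rho>) \<le> 2 * sqrt (risk (D i) (hth \<phi> t))"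
proof -
  have aH: "a \<in> H" using fg by (simp add: frechet_grad_def)
  have aL: "L2 \<rho> a" by (rule H_L2[OF aH])
  have aD: "L2 (D i) (\<lambda>z. a (fst z))" by (rule comp_L2[OF i aL])
  define X where "X = sqrt (\<integral>x. (a x)^2 \<partial>\<rho>)"
  have X0: "X \<ge> 0" by (simp add: X_def)
  have "X^2 = inner_rho \<rho> a a" by (simp add: X_def inner_rho_def power2_eq_square)
  also have "\<dots> = 2 * (\<integral>z. e i t z * a (fst z) \<partial>D i)" by (rule frechet_rep[OF i fg aH])
  also have "\<dots> \<le> 2 * (sqrt (\<integral>z. (e i t z)^2 \<partial>D i) * sqrt (\<integral>z. (a (fst z))^2 \<partial>D i))"
    using order_trans[OF abs_ge_self L2_CS[OF e_L2[OF i, of t] aD]] by simp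
  also have "\<dots> = 2 * sqrt (risk (D i) (hth \<phi> t)) * X"
    by (simp add: risk_e X_def comp_L2_int[OF i aL])
  finally have "X * X \<le> (2 * sqrt (risk (D i) (hth \<phi> t))) * X" by (simp add: power2_eq_square)
  moreover have R0: "0 \<le> risk (D i) (hth \<phi> t)" by (simp add: risk_e)
  ultimately have "X \<le> 2 * sqrt (risk (D i) (hth \<phi> t))"
  proof (cases "X = 0")
    case True then show ?thesis using R0 by simp
  next
    case False
    then have "X > 0" using X0 by simp
    then show ?thesis using \<open>X * X \<le> (2 * sqrt (risk (D i) (hth \<phi> t))) * X\<close>
      by (simp add: mult_le_cancel_right_pos)
  qed
  then show ?thesis by (simp add: X_def)
qed

lemma mv_inner_sym: "(K \<eta> *v y) \<bullet> p = y \<bullet> (K \<eta> *v p)"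
proof -
  have "K \<eta> *v y = y v* transpose (K \<eta>)"
    using transpose_matrix_vector[of "transpose (K \<eta>)" y] by simp
  then show ?thesis by (simp add: dot_lmul_matrix K_sym)
qed

lemma main:
  fixes \<eta> \<epsilon> :: real and \<theta>star \<omega> :: "real^'d" and a :: "nat \<Rightarrow> 'x \<Rightarrow> real"
  assumes n_pos: "n > 0"
    and stat: "\<And>v. v \<in> cball 0 1 \<Longrightarrow> grad (Lmeta D \<phi> \<eta> n) \<omega> \<bullet> v \<le> \<epsilon>"
    and a_grad: "\<And>i. i < n \<Longrightarrow> frechet_grad \<rho> H (risk (D i)) (hth \<phi> (adapt D \<phi> \<eta> i \<omega>)) (a i)"
  shows "\<forall>R>0.
    (let u = (\<lambda>x'. (\<Sum>i<n. a i x' * (hth \<phi> (adapt D \<phi> \<eta> i \<omega>) x' - hth \<phi> (adapt D \<phi> \<eta> i \<theta>star) x'))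
                   / (\<Sum>i<n. a i x'));
         Rbar = (1 / real n) * (\<Sum>i<n. sqrt (risk (D i) (hth \<phi> (adapt D \<phi> \<eta> i \<omega>))));
         K = Keta \<rho> \<phi> \<eta>
     in ereal (Lmeta D \<phi> \<eta> n \<omega> - Lmeta D \<phi> \<eta> n \<theta>star)
          \<le> ereal (R * \<epsilon>) + ereal (2 * Rbar) *
             (INF v\<in>cball 0 1. norm_rho_ext \<rho> (\<lambda>x. u x - (K *v \<phi> x) \<bullet> (R *\<^sub>R v))))"
proof (intro allI impI)
  fix R :: real assume Rp: "R > 0"
  define \<omega>i where "\<omega>i i = adapt D \<phi> \<eta> i \<omega>" for i
  define \<theta>i where "\<theta>i i = adapt D \<phi> \<eta> i \<theta>star" for i
  define q where "q = K \<eta> *v (\<omega> - \<theta>star)"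
  define g where "g = hth \<phi> q"
  define u where "u = (\<lambda>x'. (\<Sum>i<n. a i x' * (hth \<phi> (\<omega>i i) x' - hth \<phi> (\<theta>i i) x')) / (\<Sum>i<n. a i x'))"
  define Rb where "Rb = (1 / real n) * (\<Sum>i<n. sqrt (risk (D i) (hth \<phi> (\<omega>i i))))"
  define N where "N v = norm_rho_ext \<rho> (\<lambda>x. u x - (Keta \<rho> \<phi> \<eta> *v \<phi> x) \<bullet> (R *\<^sub>R v))" for v
  define \<Delta> where "\<Delta> = Lmeta D \<phi> \<eta> n \<omega> - Lmeta D \<phi> \<eta> n \<theta>star"
  have np: "real n > 0" using n_pos by simp
  have diff_i: "\<omega>i i - \<theta>i i = q" if "i < n" for i
    by (simp add: \<omega>i_def \<theta>i_def adapt_eq[OF that] q_def matrix_vector_mult_diff_distrib)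
  have hdiff: "hth \<phi> (\<omega>i i) x - hth \<phi> (\<theta>i i) x = g x" if "i < n" for i x
    using diff_i[OF that] by (simp add: hth_def g_def inner_diff_right[symmetric])
  have aL: "L2 \<rho> (a i)" if "i < n" for i
    using a_grad[OF that] H_L2 by (simp add: frechet_grad_def)
  have Grep: "G i (\<omega>i i) \<bullet> s = (\<integral>x. a i x * hth \<phi> s x \<partial>\<rho>)" if "i < n" for i s
  proof -
    have "inner_rho \<rho> (hth \<phi> s) (a i) = 2 * (\<integral>z. e i (\<omega>i i) z * hth \<phi> s (fst z) \<partial>D i)"
      using frechet_rep[OF that a_grad[OF that] H_lin[of s]] by (simp add: \<omega>i_def)
    also have "\<dots> = G i (\<omega>i i) \<bullet> s" using G_lin[OF that] by (simp add: hth_def)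
    finally show ?thesis by (simp add: inner_rho_def mult.commute)
  qed
  have step1: "risk (D i) (hth \<phi> (\<omega>i i)) - risk (D i) (hth \<phi> (\<theta>i i)) \<le> G i (\<omega>i i) \<bullet> q" if "i < n" for i
  proof -
    have "risk (D i) (hth \<phi> (\<theta>i i)) = risk (D i) (hth \<phi> (\<omega>i i)) + G i (\<omega>i i) \<bullet> (\<theta>i i - \<omega>i i) + (\<integral>x. (\<phi> x \<bullet> (\<theta>i i - \<omega>i i))^2 \<partial>\<rho>)"
      using F_expand[OF that, of "\<omega>i i" "\<theta>i i - \<omega>i i"] by simp
    moreover have "G i (\<omega>i i) \<bullet> (\<theta>i i - \<omega>i i) = - (G i (\<omega>i i) \<bullet> q)"
      using diff_i[OF that] by (simp add: inner_diff_right[symmetric] algebra_simps)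
    moreover have "0 \<le> (\<integral>x. (\<phi> x \<bullet> (\<theta>i i - \<omega>i i))^2 \<partial>\<rho>)" by simp
    ultimately show ?thesis by linarith
  qed
  have Rb_sum: "real n * Rb = (\<Sum>i<n. sqrt (risk (D i) (hth \<phi> (\<omega>i i))))"
    using np by (simp add: Rb_def)
  have Rb0: "Rb \<ge> 0"
  proof -
    have "0 \<le> (\<Sum>i<n. sqrt (risk (D i) (hth \<phi> (\<omega>i i))))"
      by (rule sum_nonneg) (simp add: risk_e)
    then show ?thesis unfolding Rb_def by simp
  qed
  have CSsum: "(\<Sum>i<n. \<integral>x. a i x * f x \<partial>\<rho>) \<le> 2 * real n * Rb * norm_rho \<rho> f" if fL: "L2 \<rho> f" for f
  proof -
    have "(\<Sum>i<n. \<integral>x. a i x * f x \<partial>\<rho>) \<le> (\<Sum>i<n. 2 * sqrt (risk (D i) (hth \<phi> (\<omega>i i))) * norm_rho \<rho> f)"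
    proof (rule sum_mono)
      fix i assume "i \<in> {..<n}"
      then have i: "i < n" by simp
      have "(\<integral>x. a i x * f x \<partial>\<rho>) \<le> sqrt (\<integral>x. (a i x)^2 \<partial>\<rho>) * sqrt (\<integral>x. (f x)^2 \<partial>\<rho>)"
        using order_trans[OF abs_ge_self L2_CS[OF aL[OF i] fL]] .
      also have "\<dots> \<le> 2 * sqrt (risk (D i) (hth \<phi> (\<omega>i i))) * norm_rho \<rho> f"
        unfolding norm_rho_def
        by (rule mult_right_mono) (use a_norm[OF i a_grad[OF i]] in \<open>simp_all add: \<omega>i_def\<close>)
      finally show "(\<integral>x. a i x * f x \<partial>\<rho>) \<le> 2 * sqrt (risk (D i) (hth \<phi> (\<omega>i i))) * norm_rho \<rho> f" .
    qed
    also have "\<dots> = 2 * (real n * Rb) * norm_rho \<rho> f"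
      by (simp add: Rb_sum sum_distrib_left sum_distrib_right)
    finally show ?thesis by simp
  qed
  have gL: "L2 \<rho> g" unfolding g_def by (rule hth_L2)
  have \<Delta>_le: "\<Delta> \<le> (1 / real n) * (\<Sum>i<n. \<integral>x. a i x * g x \<partial>\<rho>)"
  proof -
    have "\<Delta> = (1 / real n) * (\<Sum>i<n. risk (D i) (hth \<phi> (\<omega>i i)) - risk (D i) (hth \<phi> (\<theta>i i)))"
      by (simp add: \<Delta>_def Lmeta_def \<omega>i_def \<theta>i_def sum_subtractf right_diff_distrib)
    also have "\<dots> \<le> (1 / real n) * (\<Sum>i<n. G i (\<omega>i i) \<bullet> q)"
      by (rule mult_left_mono) (use step1 in \<open>auto intro!: sum_mono\<close>)
    also have "\<dots> = (1 / real n) * (\<Sum>i<n. \<integral>x. a i x * g x \<partial>\<rho>)"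
      using Grep by (simp add: g_def)
    finally show ?thesis .
  qed
  have eps0: "\<epsilon> \<ge> 0" using stat[of 0] by simp
  have main_ineq: "ereal \<Delta> \<le> ereal (R * \<epsilon>) + ereal (2 * Rb) * (INF v\<in>cball 0 1. N v)"
  proof (cases "Rb = 0")
    case True
    have "(\<Sum>i<n. \<integral>x. a i x * g x \<partial>\<rho>) \<le> 0" using CSsum[OF gL] True by simp
    then have "\<Delta> \<le> 0" using \<Delta>_le np by (smt (verit) divide_nonneg_pos mult_nonneg_nonpos)
    then have "\<Delta> \<le> R * \<epsilon>" using Rp eps0 by (smt (verit) mult_nonneg_nonneg)
    then show ?thesis using True by (simp add: zero_ereal_def[symmetric])
  next
    case False
    then have Rbp: "Rb > 0" using Rb0 by simp
    have per_v: "ereal ((\<Delta> - R * \<epsilon>) / (2 * Rb)) \<le> N v" if v: "v \<in> cball 0 1" for v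
    proof (cases "N v = \<infinity>")
      case True then show ?thesis by simp
    next
      case False
      define p where "p = R *\<^sub>R v"
      define w where "w = hth \<phi> (K \<eta> *v p)"
      define r where "r x = u x - (Keta \<rho> \<phi> \<eta> *v \<phi> x) \<bullet> (R *\<^sub>R v)" for x
      have rw: "r x = u x - w x" for x
        by (simp add: r_def w_def hth_def Keta_eq K_def[symmetric] p_def mv_inner_sym matrix_vector_mult_scaleR)
      have rL: "L2 \<rho> r" and Nv: "N v = ereal (norm_rho \<rho> r)"
        using False by (auto simp: N_def norm_rho_ext_def r_def[abs_def] L2_def split: if_splits)
      have wL: "L2 \<rho> w" unfolding w_def by (rule hth_L2)
      have Sw: "(\<Sum>i<n. \<integral>x. a i x * w x \<partial>\<rho>) \<le> real n * (R * \<epsilon>)"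
      proof -
        have "(\<Sum>i<n. \<integral>x. a i x * w x \<partial>\<rho>) = (\<Sum>i<n. G i (\<omega>i i) \<bullet> (K \<eta> *v p))"
          using Grep by (simp add: w_def)
        also have "\<dots> = real n * (grad (Lmeta D \<phi> \<eta> n) \<omega> \<bullet> p)"
          using np by (simp add: grad_L_inner \<omega>i_def)
        also have "\<dots> = real n * (R * (grad (Lmeta D \<phi> \<eta> n) \<omega> \<bullet> v))"
          by (simp add: p_def)
        also have "\<dots> \<le> real n * (R * \<epsilon>)"
          using stat[OF v] Rp np by (simp add: mult_left_mono)
        finally show ?thesis .
      qed
      have Sr: "(\<Sum>i<n. \<integral>x. a i x * r x \<partial>\<rho>) \<le> 2 * real n * Rb * norm_rho \<rho> r"
        by (rule CSsum[OF rL])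
      have split: "(\<Sum>i<n. \<integral>x. a i x * g x \<partial>\<rho>) = (\<Sum>i<n. \<integral>x. a i x * w x \<partial>\<rho>) + (\<Sum>i<n. \<integral>x. a i x * r x \<partial>\<rho>)"
      proof -
        have ig: "integrable \<rho> (\<lambda>x. a i x * g x)" if "i \<in> {..<n}" for i
          using that L2_mult_int[OF aL gL] by simp
        have iwr: "integrable \<rho> (\<lambda>x. a i x * w x + a i x * r x)" if "i \<in> {..<n}" for i
          using that L2_mult_int[OF aL wL] L2_mult_int[OF aL rL] by simp
        have pw: "(\<Sum>i<n. a i x * g x) = (\<Sum>i<n. a i x * w x + a i x * r x)" for x
        proof -
          have "(\<Sum>i<n. a i x * (hth \<phi> (\<omega>i i) x - hth \<phi> (\<theta>i i) x)) = (\<Sum>i<n. a i x) * g x"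
            by (simp add: hdiff sum_distrib_right)
          then have ux: "(\<Sum>i<n. a i x) * u x = (\<Sum>i<n. a i x) * g x"
            by (simp add: u_def)
          have "(\<Sum>i<n. a i x * w x + a i x * r x) = (\<Sum>i<n. a i x) * u x"
            by (simp add: rw sum_distrib_right[symmetric] distrib_left[symmetric] sum.distrib[symmetric])
          then show ?thesis using ux by (simp add: sum_distrib_right)
        qed
        have "(\<Sum>i<n. \<integral>x. a i x * g x \<partial>\<rho>) = (\<integral>x. (\<Sum>i<n. a i x * g x) \<partial>\<rho>)"
          using ig by (simp add: integral_sum)
        also have "\<dots> = (\<integral>x. (\<Sum>i<n. a i x * w x + a i x * r x) \<partial>\<rho>)" by (simp only: pw)
        also have "\<dots> = (\<Sum>i<n. \<integral>x. a i x * w x + a i x * r x \<partial>\<rho>)"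
          using iwr by (simp add: integral_sum)
        also have "\<dots> = (\<Sum>i<n. (\<integral>x. a i x * w x \<partial>\<rho>) + (\<integral>x. a i x * r x \<partial>\<rho>))"
          by (rule sum.cong[OF refl], rule Bochner_Integration.integral_add)
             (use L2_mult_int[OF aL wL] L2_mult_int[OF aL rL] in auto)
        finally show ?thesis by (simp add: sum.distrib)
      qed
      have "\<Delta> \<le> (1 / real n) * (real n * (R * \<epsilon>) + 2 * real n * Rb * norm_rho \<rho> r)"
        using \<Delta>_le split Sw Sr np by (smt (verit) mult_left_mono divide_nonneg_pos)
      also have "\<dots> = R * \<epsilon> + 2 * Rb * norm_rho \<rho> r" using np by (simp add: field_simps)
      finally have "\<Delta> - R * \<epsilon> \<le> 2 * Rb * norm_rho \<rho> r" by simp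
      then have "(\<Delta> - R * \<epsilon>) / (2 * Rb) \<le> norm_rho \<rho> r" using Rbp by (simp add: divide_le_eq mult.commute)
      then show ?thesis using Nv by simp
    qed
    have "ereal ((\<Delta> - R * \<epsilon>) / (2 * Rb)) \<le> (INF v\<in>cball 0 1. N v)"
      by (rule INF_greatest) (rule per_v)
    then have "ereal (2 * Rb) * ereal ((\<Delta> - R * \<epsilon>) / (2 * Rb)) \<le> ereal (2 * Rb) * (INF v\<in>cball 0 1. N v)"
      by (rule ereal_mult_left_mono) (use Rbp in simp)
    moreover have "ereal (2 * Rb) * ereal ((\<Delta> - R * \<epsilon>) / (2 * Rb)) = ereal (\<Delta> - R * \<epsilon>)"
      using Rbp by simp
    ultimately have "ereal (\<Delta> - R * \<epsilon>) \<le> ereal (2 * Rb) * (INF v\<in>cball 0 1. N v)" by simp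
    then have "ereal (R * \<epsilon>) + ereal (\<Delta> - R * \<epsilon>) \<le> ereal (R * \<epsilon>) + ereal (2 * Rb) * (INF v\<in>cball 0 1. N v)"
      by (rule add_left_mono)
    then show ?thesis by simp
  qed
  then show "let u = (\<lambda>x'. (\<Sum>i<n. a i x' * (hth \<phi> (adapt D \<phi> \<eta> i \<omega>) x' - hth \<phi> (adapt D \<phi> \<eta> i \<theta>star) x'))
                   / (\<Sum>i<n. a i x'));
         Rbar = (1 / real n) * (\<Sum>i<n. sqrt (risk (D i) (hth \<phi> (adapt D \<phi> \<eta> i \<omega>))));
         K = Keta \<rho> \<phi> \<eta>
     in ereal (Lmeta D \<phi> \<eta> n \<omega> - Lmeta D \<phi> \<eta> n \<theta>star)
          \<le> ereal (R * \<epsilon>) + ereal (2 * Rbar) *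
             (INF v\<in>cball 0 1. norm_rho_ext \<rho> (\<lambda>x. u x - (K *v \<phi> x) \<bullet> (R *\<^sub>R v)))"
    unfolding Let_def by (simp add: \<Delta>_def Rb_def N_def u_def \<omega>i_def \<theta>i_def)
qed

end

theorem corollaryA2:
  fixes \<rho> :: "'x measure"
    and D :: "nat \<Rightarrow> ('x \<times> real) measure"
    and n :: nat
    and \<phi> :: "'x \<Rightarrow> real^'d"
    and \<eta> \<epsilon> :: real
    and H :: "('x \<Rightarrow> real) set"
    and \<theta>star \<omega> :: "real^'d"
    and a :: "nat \<Rightarrow> 'x \<Rightarrow> real"
  assumes n_pos: "n > 0"
    and eta_pos: "\<eta> > 0"
    and rho_prob: "prob_space \<rho>"
    and D_prob: "\<And>i. i < n \<Longrightarrow> prob_space (D i)"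
    and D_sets: "\<And>i. i < n \<Longrightarrow> sets (D i) = sets (\<rho> \<Otimes>\<^sub>M borel)"
    and D_marg: "\<And>i. i < n \<Longrightarrow> distr (D i) \<rho> fst = \<rho>"
    and y_L2: "\<And>i. i < n \<Longrightarrow> integrable (D i) (\<lambda>z. (snd z)^2)"
    and H: "hilbert_fun_space \<rho> H"
    and H_lin: "\<And>\<theta>. hth \<phi> \<theta> \<in> H"
    and R_convex: "\<And>i. i < n \<Longrightarrow> convex_on_H H (risk (D i))"
    and R_diff: "\<And>i. i < n \<Longrightarrow> frechet_differentiable_on \<rho> H (risk (D i))"
    and opt: "\<And>\<theta>. Lmeta D \<phi> \<eta> n \<theta>star \<le> Lmeta D \<phi> \<eta> n \<theta>"
    and stat: "\<And>v. v \<in> cball 0 1 \<Longrightarrow> grad (Lmeta D \<phi> \<eta> n) \<omega> \<bullet> v \<le> \<epsilon>"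
    and a_grad: "\<And>i. i < n \<Longrightarrow> frechet_grad \<rho> H (risk (D i)) (hth \<phi> (adapt D \<phi> \<eta> i \<omega>)) (a i)"
  shows "\<forall>R>0.
    (let u = (\<lambda>x'. (\<Sum>i<n. a i x' * (hth \<phi> (adapt D \<phi> \<eta> i \<omega>) x' - hth \<phi> (adapt D \<phi> \<eta> i \<theta>star) x'))
                   / (\<Sum>i<n. a i x'));
         Rbar = (1 / real n) * (\<Sum>i<n. sqrt (risk (D i) (hth \<phi> (adapt D \<phi> \<eta> i \<omega>))));
         K = Keta \<rho> \<phi> \<eta>
     in ereal (Lmeta D \<phi> \<eta> n \<omega> - Lmeta D \<phi> \<eta> n \<theta>star)
          \<le> ereal (R * \<epsilon>) + ereal (2 * Rbar) *
             (INF v\<in>cball 0 1. norm_rho_ext \<rho> (\<lambda>x. u x - (K *v \<phi> x) \<bullet> (R *\<^sub>R v))))"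
proof -
  have S: "setting \<rho> D n \<phi> H"
    by (rule setting.intro) (fact rho_prob D_prob D_sets D_marg y_L2 H H_lin)+
  show ?thesis by (rule setting.main[OF S n_pos stat a_grad])
qed

end
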